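(* Let $n\ge2$, $d_1,\dots,d_n\ge2$, and let $\rho$ be a pure state (rank-one density operator) on $\mathbb{C}^{d_1}\otimes\cdots\otimes\mathbb{C}^{d_n}$. Let $T^{(12\cdots n)}$ be the vector with entries $t_{u_1,\dots,u_n}=\operatorname{tr}\big(\rho\,(A^{(1)}_{u_1})^\dagger\otimes\cdots\otimes(A^{(n)}_{u_n})^\dagger\big)$ for all $u_s\in\{1,\dots,d_s^2-1\}$, $s=1,\dots,n$. Then $$\|T^{(12\cdots n)}\|^2\le\frac{d_1\cdots d_n\big(n-1-\sum_{s=1}^n\frac{1}{d_s^2}\big)+1}{n-1}.$$
   Context: Generalized Pauli operators: for an integer $d\ge2$, let $\omega$ be a fixed primitive $d$-th root of unity and $E_{m,j}$ the $d\times d$ matrix units (indices modulo $d$). Writing $u\in\{0,\dots,d^2-1\}$ uniquely as $u=di+j$ with $0\le i,j\le d-1$, set $A_u=\sum_{m=0}^{d-1}\omega^{im}E_{m,m+j}$; so $A_0=I_d$ and $\operatorname{tr}(A_uA_v^\dagger)=d\delta_{uv}$. $A^{(s)}_u$ denotes these for $d=d_s$. $\|v\|=\sqrt{v^\dagger v}$. *)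

theory Defs
  imports Complex_Main "HOL-Library.FuncSet"
begin

text \<open>Generalized Pauli operator A_u of dimension d (w.r.t. the root of unity w),
  given by its matrix entries: for u = d*i + j, (A_u)_{m,c} = w^(i*m) if c = m + j (mod d), else 0.
  Indices m, c range over {0..<d}.\<close>
definition gpauli :: "complex \<Rightarrow> nat \<Rightarrow> nat \<Rightarrow> nat \<Rightarrow> nat \<Rightarrow> complex" where
  "gpauli w d u m c = (if c = (m + u mod d) mod d then w ^ ((u div d) * m) else 0)"

definition primitive_root :: "complex \<Rightarrow> nat \<Rightarrow> bool" where
  "primitive_root w d \<longleftrightarrow> w ^ d = 1 \<and> (\<forall>k. 0 < k \<and> k < d \<longrightarrow> w ^ k \<noteq> 1)"

text \<open>Computational basis index tuples of C^{d_0} x ... x C^{d_{n-1}} (parties indexed 0..n-1).\<close>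
definition basis_idx :: "nat \<Rightarrow> (nat \<Rightarrow> nat) \<Rightarrow> (nat \<Rightarrow> nat) set" where
  "basis_idx n d = PiE {..<n} (\<lambda>s. {..<d s})"

definition pure_state :: "nat \<Rightarrow> (nat \<Rightarrow> nat) \<Rightarrow> ((nat \<Rightarrow> nat) \<Rightarrow> (nat \<Rightarrow> nat) \<Rightarrow> complex) \<Rightarrow> bool" where
  "pure_state n d rho \<longleftrightarrow> (\<exists>psi :: (nat \<Rightarrow> nat) \<Rightarrow> complex.
     (\<Sum>k\<in>basis_idx n d. (cmod (psi k))\<^sup>2) = 1 \<and>
     (\<forall>k\<in>basis_idx n d. \<forall>l\<in>basis_idx n d. rho k l = psi k * cnj (psi l)))"

text \<open>Correlation tensor entry t_u = tr(rho (A_{u_0}^dagger x ... x A_{u_{n-1}}^dagger))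
  = sum_{k,l} rho_{k,l} * prod_s conj((A_{u_s})_{k_s,l_s}).\<close>
definition corr_entry :: "nat \<Rightarrow> (nat \<Rightarrow> nat) \<Rightarrow> (nat \<Rightarrow> complex) \<Rightarrow>
    ((nat \<Rightarrow> nat) \<Rightarrow> (nat \<Rightarrow> nat) \<Rightarrow> complex) \<Rightarrow> (nat \<Rightarrow> nat) \<Rightarrow> complex" where
  "corr_entry n d w rho u = (\<Sum>k\<in>basis_idx n d. \<Sum>l\<in>basis_idx n d.
      rho k l * (\<Prod>s<n. cnj (gpauli (w s) (d s) (u s) (k s) (l s))))"

definition corr_idx :: "nat \<Rightarrow> (nat \<Rightarrow> nat) \<Rightarrow> (nat \<Rightarrow> nat) set" where
  "corr_idx n d = PiE {..<n} (\<lambda>s. {1..<(d s)^2})"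

end

theory Submission
  imports Defs
begin

lemma sum_split_dm: fixes f :: "nat \<Rightarrow> 'a::comm_monoid_add" shows "(\<Sum>x<d*m. f x) = (\<Sum>i<m. \<Sum>j<d. f (d*i+j))"
proof (induct m)
  case 0 then show ?case by simp
next
  case (Suc m)
  have "{..<d*Suc m} = {..<d*m} \<union> {d*m..<d*m+d}" by auto
  then have "(\<Sum>x<d*Suc m. f x) = (\<Sum>x<d*m. f x) + (\<Sum>x\<in>{d*m..<d*m+d}. f x)"
    by (simp add: sum.union_disjoint ivl_disj_int)
  also have "(\<Sum>x\<in>{d*m..<d*m+d}. f x) = (\<Sum>j<d. f (d*m+j))"
  proof -
    have "(\<Sum>x\<in>{0+d*m..<d+d*m}. f x) = (\<Sum>j\<in>{0..<d}. f (j + d*m))" by (rule sum.shift_bounds_nat_ivl)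
    then show ?thesis by (simp add: lessThan_atLeast0 add.commute)
  qed
  finally show ?case using Suc by simp
qed

lemma cmod_root: assumes "w ^ d = 1" "d > 0" shows "cnj w * w = 1"
proof -
  have "cmod w ^ d = 1" using assms by (metis norm_one norm_power)
  then have "cmod w = 1" using assms power_eq_imp_eq_base[of "cmod w" d 1] by simp
  then show ?thesis by (metis complex_norm_square mult.commute of_real_1 power_one)
qed

lemma geo_zero: fixes z :: complex assumes "z ^ d = 1" "z \<noteq> 1" shows "(\<Sum>i<d. z ^ i) = 0"
  using assms by (simp add: geometric_sum)

lemma modA: "a < (d::nat) \<Longrightarrow> b < d \<Longrightarrow> j < d \<Longrightarrow> b = (a+j) mod d \<Longrightarrow> j = (b+d-a) mod d"
  by (cases "a + j < d") (auto simp: mod_if)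
lemma modB: "a < (d::nat) \<Longrightarrow> b < d \<Longrightarrow> b = (a + (b+d-a) mod d) mod d"
  by (simp add: mod_add_right_eq)
lemma zpow: "(w::complex) ^ d = 1 \<Longrightarrow> (cnj w ^ a * w ^ a') ^ d = 1"
proof -
  assume "w ^ d = 1"
  then have "(cnj w ^ a) ^ d = 1" "(w ^ a') ^ d = 1"
    by (simp_all add: power_mult[symmetric] mult.commute[of _ d] power_mult flip: complex_cnj_power)
  then show ?thesis by (simp add: power_mult_distrib)
qed

lemma orth:
  assumes d: "d \<ge> 2" and w: "primitive_root w d" and ab: "a < d" "b < d" "a' < d" "b' < d"
  shows "(\<Sum>x<d^2. cnj (gpauli w d x a b) * gpauli w d x a' b') = (if a = a' \<and> b = b' then of_nat d else 0)"
proof -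
  have wd: "w ^ d = 1" and wk: "\<And>k. 0 < k \<Longrightarrow> k < d \<Longrightarrow> w ^ k \<noteq> 1" using w by (auto simp: primitive_root_def)
  have cw: "cnj w * w = 1" using cmod_root wd d by auto
  have pw: "\<And>i. cnj w ^ (i * a) * w ^ (i * a') = (cnj w ^ a * w ^ a') ^ i"
    unfolding power_mult_distrib power_mult[symmetric] by (simp add: ac_simps)
  have dv: "\<And>i j. j < d \<Longrightarrow> (d*i+j) div d = i" "\<And>i j. j < d \<Longrightarrow> (d*i+j) mod d = j" using d by auto
  have "(\<Sum>x<d^2. cnj (gpauli w d x a b) * gpauli w d x a' b') =
     (\<Sum>i<d. \<Sum>j<d. cnj (gpauli w d (d*i+j) a b) * gpauli w d (d*i+j) a' b')"
    by (simp add: power2_eq_square sum_split_dm)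
  also have "\<dots> = (\<Sum>j<d. \<Sum>i<d. (if b = (a + j) mod d \<and> b' = (a' + j) mod d then (cnj w ^ a * w ^ a') ^ i else 0))"
    apply (subst sum.swap)
    apply (intro sum.cong refl)
    using d by (auto simp: gpauli_def dv pw)
  finally have eq: "(\<Sum>x<d^2. cnj (gpauli w d x a b) * gpauli w d x a' b') = \<dots>" .
  show ?thesis
  proof (cases "a = a'")
    case False
    define z where "z = cnj w ^ a * w ^ a'"
    have z1: "z ^ d = 1" unfolding z_def using zpow wd by blast
    have "z \<noteq> 1"
    proof (cases "a < a'")
      case True
      then have "z = (cnj w * w) ^ a * w ^ (a' - a)" unfolding z_def
        by (simp add: power_mult_distrib power_add[symmetric])
      then show ?thesis using wk[of "a'-a"] True ab cw by simp
    next
      case F: False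
      then have "a' < a" using False by simp
      then have "z = (cnj w * w) ^ a' * cnj w ^ (a - a')" unfolding z_def
        by (simp add: power_mult_distrib mult.assoc mult.left_commute power_add[symmetric])
      then have "z = cnj (w ^ (a - a'))" using cw by simp
      moreover have "w ^ (a - a') \<noteq> 1" using wk[of "a-a'"] \<open>a' < a\<close> ab by simp
      ultimately show ?thesis by (metis complex_cnj_one complex_cnj_cnj)
    qed
    then have zs: "(\<Sum>i<d. z ^ i) = 0" using geo_zero z1 by blast
    have inner: "(\<Sum>i<d. if C then z ^ i else 0) = 0" for C using zs by (cases C) simp_all
    have "(\<Sum>j<d. \<Sum>i<d. (if b = (a + j) mod d \<and> b' = (a' + j) mod d then (cnj w ^ a * w ^ a') ^ i else 0)) = 0"
      using inner[unfolded z_def] by simp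
    then show ?thesis using eq False by simp
  next
    case True
    have "(\<Sum>j<d. \<Sum>i<d. (if b = (a + j) mod d \<and> b' = (a' + j) mod d then (cnj w ^ a * w ^ a') ^ i else 0))
       = (\<Sum>j<d. if b = (a + j) mod d \<and> b' = (a + j) mod d then of_nat d else 0)"
    proof -
      have one: "cnj w ^ a * w ^ a' = 1" using True cw by (simp add: power_mult_distrib[symmetric])
      have inner: "(\<Sum>i<d. if C then (1::complex) ^ i else 0) = (if C then of_nat d else 0)" for C by (cases C) simp_all
      show ?thesis unfolding one using inner True by simp
    qed
    also have "\<dots> = (if b = b' then of_nat d else 0)"
    proof (cases "b = b'")
      case True
      have "{..<d} \<inter> {j. b = (a + j) mod d} = {(b + d - a) mod d}"
        using modA[of a d b] modB[of a d b] ab d by auto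
      then have "card ({..<d} \<inter> {j. b = (a + j) mod d}) = 1" by simp
      then show ?thesis using True by (simp add: sum.If_cases)
    qed (auto intro!: sum.neutral)
    finally show ?thesis using eq True by simp
  qed
qed

definition GG :: "nat \<Rightarrow> (nat\<Rightarrow>nat) \<Rightarrow> (nat\<Rightarrow>complex) \<Rightarrow> (nat\<Rightarrow>nat) \<Rightarrow> (nat\<Rightarrow>nat) \<Rightarrow> (nat\<Rightarrow>nat) \<Rightarrow> complex" where
  "GG n d w u k l = (\<Prod>s<n. cnj (gpauli (w s) (d s) (u s) (k s) (l s)))"
definition tt :: "nat \<Rightarrow> (nat\<Rightarrow>nat) \<Rightarrow> (nat\<Rightarrow>complex) \<Rightarrow> ((nat\<Rightarrow>nat) \<Rightarrow> complex) \<Rightarrow> (nat\<Rightarrow>nat) \<Rightarrow> complex" where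
  "tt n d w psi u = (\<Sum>k\<in>basis_idx n d. \<Sum>l\<in>basis_idx n d. psi k * cnj (psi l) * GG n d w u k l)"
definition HH :: "nat \<Rightarrow> (nat\<Rightarrow>nat) \<Rightarrow> (nat\<Rightarrow>complex) \<Rightarrow> (nat \<Rightarrow> nat set) \<Rightarrow> (nat\<Rightarrow>nat) \<Rightarrow> (nat\<Rightarrow>nat) \<Rightarrow> (nat\<Rightarrow>nat) \<Rightarrow> (nat\<Rightarrow>nat) \<Rightarrow> complex" where
  "HH n d w Us k l k' l' = (\<Prod>r<n. \<Sum>x\<in>Us r. cnj (gpauli (w r) (d r) x (k r) (l r)) * gpauli (w r) (d r) x (k' r) (l' r))"

lemma finite_basis: "finite (basis_idx n d)"
  unfolding basis_idx_def by (simp add: finite_PiE)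

lemma sumsq:
  assumes fin: "\<And>r. r < n \<Longrightarrow> finite (Us r)"
  shows "(\<Sum>u\<in>PiE {..<n} Us. tt n d w psi u * cnj (tt n d w psi u)) =
    (\<Sum>k\<in>basis_idx n d. \<Sum>l\<in>basis_idx n d. \<Sum>k'\<in>basis_idx n d. \<Sum>l'\<in>basis_idx n d.
       psi k * cnj (psi l) * cnj (psi k') * psi l' * HH n d w Us k l k' l')"
proof -
  let ?K = "basis_idx n d"
  let ?g = "\<lambda>r x a b. gpauli (w r) (d r) x a b"
  have 1: "tt n d w psi u * cnj (tt n d w psi u) = (\<Sum>k\<in>?K. \<Sum>l\<in>?K. \<Sum>k'\<in>?K. \<Sum>l'\<in>?K.
       psi k * cnj (psi l) * cnj (psi k') * psi l' * (\<Prod>r<n. cnj (?g r (u r) (k r) (l r)) * ?g r (u r) (k' r) (l' r)))" for u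
  proof -
    have "tt n d w psi u * cnj (tt n d w psi u) = (\<Sum>k\<in>?K. \<Sum>l\<in>?K. \<Sum>k'\<in>?K. \<Sum>l'\<in>?K.
       (psi k * cnj (psi l) * GG n d w u k l) * cnj (psi k' * cnj (psi l') * GG n d w u k' l'))"
      unfolding tt_def apply (simp add: sum_product cnj_sum)
      apply (rule sum.cong[OF refl])
      by (rule sum.swap)
    also have "\<dots> = (\<Sum>k\<in>?K. \<Sum>l\<in>?K. \<Sum>k'\<in>?K. \<Sum>l'\<in>?K.
       psi k * cnj (psi l) * cnj (psi k') * psi l' * (\<Prod>r<n. cnj (?g r (u r) (k r) (l r)) * ?g r (u r) (k' r) (l' r)))"
      unfolding GG_def by (simp add: cnj_prod prod.distrib ac_simps)
    finally show ?thesis .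
  qed
  have "(\<Sum>u\<in>PiE {..<n} Us. tt n d w psi u * cnj (tt n d w psi u)) =
     (\<Sum>k\<in>?K. \<Sum>l\<in>?K. \<Sum>k'\<in>?K. \<Sum>l'\<in>?K. \<Sum>u\<in>PiE {..<n} Us.
       psi k * cnj (psi l) * cnj (psi k') * psi l' * (\<Prod>r<n. cnj (?g r (u r) (k r) (l r)) * ?g r (u r) (k' r) (l' r)))"
    unfolding 1 by (simp only: sum.swap[of _ "PiE {..<n} Us"])
  also have "\<dots> = (\<Sum>k\<in>?K. \<Sum>l\<in>?K. \<Sum>k'\<in>?K. \<Sum>l'\<in>?K.
       psi k * cnj (psi l) * cnj (psi k') * psi l' * HH n d w Us k l k' l')"
    unfolding HH_def sum_distrib_left[symmetric]
    by (subst prod_sum_PiE) (auto simp: fin)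
  finally show ?thesis .
qed

lemma collapse2: assumes "finite K" "k \<in> K" "l \<in> K"
  shows "(\<Sum>k'\<in>K. \<Sum>l'\<in>K. f k' l' * (if k = k' \<and> l = l' then c else 0)) = f k l * (c::complex)"
proof -
  have "(\<Sum>k'\<in>K. \<Sum>l'\<in>K. f k' l' * (if k = k' \<and> l = l' then c else 0)) = (\<Sum>k'\<in>K. if k = k' then f k l * c else 0)"
  proof (rule sum.cong[OF refl])
    fix k' assume "k' \<in> K"
    show "(\<Sum>l'\<in>K. f k' l' * (if k = k' \<and> l = l' then c else 0)) = (if k = k' then f k l * c else 0)"
      using assms by (cases "k = k'") (simp_all add: if_distrib[of "\<lambda>x. f _ _ * x"] cong: if_cong)
  qed
  also have "\<dots> = f k l * c" using assms by simp
  finally show ?thesis .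
qed

lemma gp0: "a < d \<Longrightarrow> gpauli w d 0 a b = (if b = a then 1 else 0)"
  by (simp add: gpauli_def)

lemma basis_lt: "k \<in> basis_idx n d \<Longrightarrow> r < n \<Longrightarrow> k r < d r"
  unfolding basis_idx_def by (auto dest: PiE_mem)

lemma basis_ext: "k \<in> basis_idx n d \<Longrightarrow> k' \<in> basis_idx n d \<Longrightarrow> (\<And>r. r < n \<Longrightarrow> k r = k' r) \<Longrightarrow> k = k'"
  unfolding basis_idx_def by (rule PiE_ext) auto

lemma HH_full:
  assumes d: "\<forall>r<n. d r \<ge> 2" and w: "\<forall>r<n. primitive_root (w r) (d r)"
    and K: "k \<in> basis_idx n d" "l \<in> basis_idx n d" "k' \<in> basis_idx n d" "l' \<in> basis_idx n d"
  shows "HH n d w (\<lambda>r. {..<d r ^ 2}) k l k' l' = (if k = k' \<and> l = l' then of_nat (\<Prod>r<n. d r) else 0)"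
proof -
  have "HH n d w (\<lambda>r. {..<d r ^ 2}) k l k' l' = (\<Prod>r<n. if k r = k' r \<and> l r = l' r then of_nat (d r) else 0)"
    unfolding HH_def using d w basis_lt[OF K(1)] basis_lt[OF K(2)] basis_lt[OF K(3)] basis_lt[OF K(4)]
    by (intro prod.cong refl orth) auto
  also have "\<dots> = (if k = k' \<and> l = l' then of_nat (\<Prod>r<n. d r) else 0)"
  proof (cases "k = k' \<and> l = l'")
    case True then show ?thesis by simp
  next
    case False
    then obtain r where "r < n" "\<not> (k r = k' r \<and> l r = l' r)"
      using basis_ext[OF K(1) K(3)] basis_ext[OF K(2) K(4)] by blast
    then have "(\<Prod>r<n. if k r = k' r \<and> l r = l' r then of_nat (d r) else (0::complex)) = 0"
      by (intro prod_zero) auto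
    then show ?thesis using False by simp
  qed
  finally show ?thesis .
qed

lemma HH_zero:
  assumes d: "\<forall>r<n. d r \<ge> 2" and w: "\<forall>r<n. primitive_root (w r) (d r)" and s: "s < n"
    and K: "k \<in> basis_idx n d" "l \<in> basis_idx n d" "k' \<in> basis_idx n d" "l' \<in> basis_idx n d"
  shows "HH n d w (\<lambda>r. if r = s then {0} else {..<d r ^ 2}) k l k' l' =
    (if (\<forall>r<n. r \<noteq> s \<longrightarrow> k r = k' r \<and> l r = l' r) \<and> l s = k s \<and> l' s = k' s then of_nat (\<Prod>r\<in>{..<n}-{s}. d r) else 0)"
proof -
  let ?f = "\<lambda>r. if r = s then (if l s = k s \<and> l' s = k' s then 1 else 0) else (if k r = k' r \<and> l r = l' r then of_nat (d r) else (0::complex))"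
  have "HH n d w (\<lambda>r. if r = s then {0} else {..<d r ^ 2}) k l k' l' = (\<Prod>r<n. ?f r)"
    unfolding HH_def using d w basis_lt[OF K(1)] basis_lt[OF K(2)] basis_lt[OF K(3)] basis_lt[OF K(4)]
    by (intro prod.cong refl) (auto simp: orth gp0)
  also have "\<dots> = ?f s * (\<Prod>r\<in>{..<n}-{s}. ?f r)"
    using s by (subst prod.remove[of _ s]) auto
  also have "\<dots> = (if (\<forall>r<n. r \<noteq> s \<longrightarrow> k r = k' r \<and> l r = l' r) \<and> l s = k s \<and> l' s = k' s then of_nat (\<Prod>r\<in>{..<n}-{s}. d r) else 0)"
  proof (cases "\<forall>r<n. r \<noteq> s \<longrightarrow> k r = k' r \<and> l r = l' r")
    case True
    then have "(\<Prod>r\<in>{..<n}-{s}. ?f r) = (\<Prod>r\<in>{..<n}-{s}. of_nat (d r))" by (intro prod.cong) auto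
    then show ?thesis using True by simp
  next
    case False
    then obtain r where "r < n" "r \<noteq> s" "\<not> (k r = k' r \<and> l r = l' r)" by blast
    then have "(\<Prod>r\<in>{..<n}-{s}. ?f r) = 0" by (intro prod_zero) auto
    then show ?thesis using False by simp
  qed
  finally show ?thesis .
qed

lemma total:
  assumes d: "\<forall>r<n. d r \<ge> 2" and w: "\<forall>r<n. primitive_root (w r) (d r)"
    and nrm: "(\<Sum>k\<in>basis_idx n d. (cmod (psi k))\<^sup>2) = 1"
  shows "(\<Sum>u\<in>PiE {..<n} (\<lambda>r. {..<d r ^ 2}). tt n d w psi u * cnj (tt n d w psi u)) = of_nat (\<Prod>r<n. d r)"
proof -
  let ?K = "basis_idx n d"
  let ?D = "of_nat (\<Prod>r<n. d r) :: complex"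
  have "(\<Sum>u\<in>PiE {..<n} (\<lambda>r. {..<d r ^ 2}). tt n d w psi u * cnj (tt n d w psi u)) =
    (\<Sum>k\<in>?K. \<Sum>l\<in>?K. \<Sum>k'\<in>?K. \<Sum>l'\<in>?K.
       psi k * cnj (psi l) * cnj (psi k') * psi l' * (if k = k' \<and> l = l' then ?D else 0))"
    by (subst sumsq) (auto simp: HH_full[OF d w] intro!: sum.cong)
  also have "\<dots> = (\<Sum>k\<in>?K. \<Sum>l\<in>?K. psi k * cnj (psi l) * cnj (psi k) * psi l * ?D)"
    by (intro sum.cong refl collapse2[where f = "\<lambda>k' l'. psi _ * cnj (psi _) * cnj (psi k') * psi l'", OF finite_basis])
  also have "\<dots> = ?D * (\<Sum>k\<in>?K. psi k * cnj (psi k)) * (\<Sum>l\<in>?K. psi l * cnj (psi l))"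
    by (simp add: sum_distrib_left sum_distrib_right ac_simps)
  also have "(\<Sum>k\<in>?K. psi k * cnj (psi k)) = 1"
  proof -
    have "(\<Sum>k\<in>?K. psi k * cnj (psi k)) = of_real (\<Sum>k\<in>?K. (cmod (psi k))\<^sup>2)"
      unfolding of_real_sum by (intro sum.cong refl) (rule complex_norm_square[symmetric])
    then show ?thesis using nrm by simp
  qed
  finally show ?thesis by simp
qed


definition MM :: "nat \<Rightarrow> (nat\<Rightarrow>nat) \<Rightarrow> nat \<Rightarrow> ((nat\<Rightarrow>nat) \<Rightarrow> complex) \<Rightarrow> nat \<Rightarrow> nat \<Rightarrow> complex" where
  "MM n d s psi a b = (\<Sum>k\<in>basis_idx n d. \<Sum>k'\<in>basis_idx n d.
     if k s = a \<and> k' s = b \<and> (\<forall>r<n. r \<noteq> s \<longrightarrow> k r = k' r) then psi k * cnj (psi k') else 0)"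

lemma dsum1: "y < (D::nat) \<Longrightarrow> (\<Sum>b<D. if y = b \<and> Q b then X else 0) = (if Q y then X else (0::complex))"
proof -
  assume y: "y < D"
  have "(\<Sum>b<D. if y = b \<and> Q b then X else 0) = (\<Sum>b<D. if y = b then (if Q y then X else 0) else 0)"
    by (rule sum.cong) auto
  then show ?thesis using y by simp
qed

lemma dsum: "x < D \<Longrightarrow> y < (D::nat) \<Longrightarrow> (\<Sum>a<D. \<Sum>b<D. if x = a \<and> y = b \<and> R a b then X else 0) = (if R x y then X else (0::complex))"
proof -
  assume xy: "x < D" "y < D"
  have "(\<Sum>a<D. \<Sum>b<D. if x = a \<and> y = b \<and> R a b then X else 0) = (\<Sum>a<D. if x = a then (if R a y then X else 0) else 0)"
    using xy by (intro sum.cong refl) (auto simp: dsum1)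
  also have "\<dots> = (if R x y then X else 0)" using xy by simp
  finally show ?thesis .
qed

lemma ifmult: "(if P then x else 0) * (if Q then y else 0) = (if P \<and> Q then x * y else (0::complex))"
  by simp

lemma MM_sq:
  assumes s: "s < n"
  shows "(\<Sum>a<d s. \<Sum>b<d s. MM n d s psi a b * cnj (MM n d s psi a b)) =
    (\<Sum>k\<in>basis_idx n d. \<Sum>l\<in>basis_idx n d. \<Sum>k'\<in>basis_idx n d. \<Sum>l'\<in>basis_idx n d.
       if (\<forall>r<n. r \<noteq> s \<longrightarrow> k r = k' r \<and> l r = l' r) \<and> l s = k s \<and> l' s = k' s
       then psi k * cnj (psi l) * cnj (psi k') * psi l' else 0)"
proof -
  let ?K = "basis_idx n d"
  let ?ag = "\<lambda>k k'. \<forall>r<n. r \<noteq> s \<longrightarrow> k r = k' r"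
  have "(\<Sum>a<d s. \<Sum>b<d s. MM n d s psi a b * cnj (MM n d s psi a b)) =
    (\<Sum>a<d s. \<Sum>b<d s. \<Sum>k\<in>?K. \<Sum>l\<in>?K. \<Sum>k'\<in>?K. \<Sum>l'\<in>?K.
      if k s = a \<and> k' s = b \<and> (?ag k k' \<and> l s = a \<and> l' s = b \<and> ?ag l l') then psi k * cnj (psi k') * (cnj (psi l) * psi l') else 0)"
    unfolding MM_def cnj_sum sum_product by (intro sum.cong refl) auto
  also have "\<dots> = (\<Sum>k\<in>?K. \<Sum>l\<in>?K. \<Sum>k'\<in>?K. \<Sum>l'\<in>?K. \<Sum>a<d s. \<Sum>b<d s. 
      if k s = a \<and> k' s = b \<and> (?ag k k' \<and> l s = a \<and> l' s = b \<and> ?ag l l') then psi k * cnj (psi k') * (cnj (psi l) * psi l') else 0)"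
    by (simp only: sum.swap[of _ "{..<d s}" ?K])
  also have "\<dots> = (\<Sum>k\<in>?K. \<Sum>l\<in>?K. \<Sum>k'\<in>?K. \<Sum>l'\<in>?K.
      if ?ag k k' \<and> l s = k s \<and> l' s = k' s \<and> ?ag l l' then psi k * cnj (psi k') * (cnj (psi l) * psi l') else 0)"
    using basis_lt s by (intro sum.cong refl dsum) auto
  also have "\<dots> = (\<Sum>k\<in>basis_idx n d. \<Sum>l\<in>basis_idx n d. \<Sum>k'\<in>basis_idx n d. \<Sum>l'\<in>basis_idx n d.
       if (\<forall>r<n. r \<noteq> s \<longrightarrow> k r = k' r \<and> l r = l' r) \<and> l s = k s \<and> l' s = k' s
       then psi k * cnj (psi l) * cnj (psi k') * psi l' else 0)"
    by (intro sum.cong refl if_cong) (auto simp: ac_simps)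
  finally show ?thesis .
qed


lemma ifcomm: "(x::complex) * (if P then D else 0) = D * (if P then x else 0)"
  by simp

lemma zero_s:
  assumes d: "\<forall>r<n. d r \<ge> 2" and w: "\<forall>r<n. primitive_root (w r) (d r)" and s: "s < n"
  shows "(\<Sum>u\<in>PiE {..<n} (\<lambda>r. if r = s then {0} else {..<d r ^ 2}). tt n d w psi u * cnj (tt n d w psi u)) =
    of_nat (\<Prod>r\<in>{..<n}-{s}. d r) * (\<Sum>a<d s. \<Sum>b<d s. MM n d s psi a b * cnj (MM n d s psi a b))"
proof -
  let ?K = "basis_idx n d"
  let ?D = "of_nat (\<Prod>r\<in>{..<n}-{s}. d r) :: complex"
  let ?c = "(\<forall>r<n. r \<noteq> s \<longrightarrow> k r = k' r \<and> l r = l' r) \<and> l s = k s \<and> l' s = k' s"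
  have "(\<Sum>u\<in>PiE {..<n} (\<lambda>r. if r = s then {0} else {..<d r ^ 2}). tt n d w psi u * cnj (tt n d w psi u)) =
    (\<Sum>k\<in>?K. \<Sum>l\<in>?K. \<Sum>k'\<in>?K. \<Sum>l'\<in>?K.
       psi k * cnj (psi l) * cnj (psi k') * psi l' * (if (\<forall>r<n. r \<noteq> s \<longrightarrow> k r = k' r \<and> l r = l' r) \<and> l s = k s \<and> l' s = k' s then ?D else 0))"
    by (subst sumsq) (auto simp: HH_zero[OF d w s] intro!: sum.cong)
  also have "\<dots> = ?D * (\<Sum>k\<in>?K. \<Sum>l\<in>?K. \<Sum>k'\<in>?K. \<Sum>l'\<in>?K.
       if (\<forall>r<n. r \<noteq> s \<longrightarrow> k r = k' r \<and> l r = l' r) \<and> l s = k s \<and> l' s = k' s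
       then psi k * cnj (psi l) * cnj (psi k') * psi l' else 0)"
    unfolding sum_distrib_left by (intro sum.cong refl) (rule ifcomm)
  also have "\<dots> = ?D * (\<Sum>a<d s. \<Sum>b<d s. MM n d s psi a b * cnj (MM n d s psi a b))"
    using MM_sq[OF s] by simp
  finally show ?thesis .
qed

lemma MM_diag:
  assumes s: "s < n"
  shows "MM n d s psi a a = of_real (\<Sum>k\<in>basis_idx n d. if k s = a then (cmod (psi k))\<^sup>2 else 0)"
proof -
  let ?K = "basis_idx n d"
  have "MM n d s psi a a = (\<Sum>k\<in>?K. \<Sum>k'\<in>?K. if k' = k then (if k s = a then psi k * cnj (psi k) else 0) else 0)"
    unfolding MM_def
  proof (intro sum.cong refl)
    fix k k' assume k: "k \<in> ?K" and k': "k' \<in> ?K"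
    have "(k s = a \<and> k' s = a \<and> (\<forall>r<n. r \<noteq> s \<longrightarrow> k r = k' r)) = (k' = k \<and> k s = a)"
      using basis_ext[OF k k'] by metis
    then show "(if k s = a \<and> k' s = a \<and> (\<forall>r<n. r \<noteq> s \<longrightarrow> k r = k' r) then psi k * cnj (psi k') else 0) =
      (if k' = k then (if k s = a then psi k * cnj (psi k) else 0) else 0)" by auto
  qed
  also have "\<dots> = (\<Sum>k\<in>?K. if k s = a then psi k * cnj (psi k) else 0)"
    using finite_basis by simp
  also have "\<dots> = of_real (\<Sum>k\<in>?K. if k s = a then (cmod (psi k))\<^sup>2 else 0)"
    unfolding of_real_sum by (intro sum.cong refl) (auto simp: complex_norm_square[symmetric] simp del: of_real_power)
  finally show ?thesis .
qed


lemma cs_simple: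
  fixes p :: "nat \<Rightarrow> real"
  assumes D: "D > 0" and sp: "(\<Sum>a<D. p a) = 1"
  shows "1 / real D \<le> (\<Sum>a<D. (p a)\<^sup>2)"
proof -
  have "0 \<le> (\<Sum>a<D. (p a - 1 / real D)\<^sup>2)" by (intro sum_nonneg) simp
  also have "\<dots> = (\<Sum>a<D. (p a)\<^sup>2 - 2 / real D * p a + (1 / real D)\<^sup>2)"
    by (intro sum.cong refl) (simp add: power2_diff)
  also have "\<dots> = (\<Sum>a<D. (p a)\<^sup>2) - 2 / real D * (\<Sum>a<D. p a) + real D * (1 / real D)\<^sup>2"
    by (simp only: sum.distrib sum_subtractf sum_distrib_left[symmetric] sum_constant card_lessThan)
  also have "\<dots> = (\<Sum>a<D. (p a)\<^sup>2) - 1 / real D"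
    using D sp by (simp add: power2_eq_square field_simps)
  finally show ?thesis by simp
qed

lemma lower:
  assumes s: "s < n" and ds: "d s > 0" and nrm: "(\<Sum>k\<in>basis_idx n d. (cmod (psi k))\<^sup>2) = 1"
  shows "1 / real (d s) \<le> (\<Sum>a<d s. \<Sum>b<d s. (cmod (MM n d s psi a b))\<^sup>2)"
proof -
  let ?K = "basis_idx n d"
  define p where "p a = (\<Sum>k\<in>?K. if k s = a then (cmod (psi k))\<^sup>2 else 0)" for a
  have "(\<Sum>a<d s. p a) = (\<Sum>k\<in>?K. \<Sum>a<d s. if k s = a then (cmod (psi k))\<^sup>2 else 0)"
    unfolding p_def by (rule sum.swap)
  also have "\<dots> = (\<Sum>k\<in>?K. (cmod (psi k))\<^sup>2)"
    using basis_lt s by (intro sum.cong refl) auto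
  finally have sp: "(\<Sum>a<d s. p a) = 1" using nrm by simp
  have pnn: "p a \<ge> 0" for a unfolding p_def by (intro sum_nonneg) auto
  have diag: "(cmod (MM n d s psi a a))\<^sup>2 = (p a)\<^sup>2" for a
  proof -
    have "MM n d s psi a a = of_real (p a)" using MM_diag[OF s, of d psi a] unfolding p_def .
    then have "cmod (MM n d s psi a a) = p a" using pnn[of a] by (simp only: norm_of_real)
    then show ?thesis by simp
  qed
  have "1 / real (d s) \<le> (\<Sum>a<d s. (p a)\<^sup>2)" using cs_simple[OF ds sp] .
  also have "\<dots> = (\<Sum>a<d s. (cmod (MM n d s psi a a))\<^sup>2)" using diag by simp
  also have "\<dots> \<le> (\<Sum>a<d s. \<Sum>b<d s. (cmod (MM n d s psi a b))\<^sup>2)"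
    by (intro sum_mono member_le_sum[where f = "\<lambda>b. (cmod (MM n d s psi _ b))\<^sup>2"]) auto
  finally show ?thesis .
qed

lemma comb:
  fixes F :: "(nat \<Rightarrow> nat) \<Rightarrow> real" and L :: "nat \<Rightarrow> real"
  assumes fin: "finite V" and nn: "\<And>u. u \<in> V \<Longrightarrow> F u \<ge> 0" and u0: "u0 \<in> V"
    and z: "\<And>u. u \<in> V \<Longrightarrow> (\<forall>s<n. u s = 0) \<Longrightarrow> u = u0" and u0z: "\<forall>s<n. u0 s = 0"
    and F0: "F u0 \<le> 1" and n: "n \<ge> 2"
    and tot: "(\<Sum>u\<in>V. F u) = D" and low: "\<And>s. s < n \<Longrightarrow> L s \<le> (\<Sum>u\<in>{u\<in>V. u s = 0}. F u)"
  shows "(\<Sum>u\<in>{u\<in>V. \<forall>s<n. u s \<noteq> 0}. F u) \<le> (D * (real n - 1) - (\<Sum>s<n. L s) + 1) / (real n - 1)"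
proof -
  let ?C = "{u\<in>V. \<forall>s<n. u s \<noteq> 0}"
  have "(\<Sum>s<n. L s) \<le> (\<Sum>s<n. \<Sum>u\<in>{u\<in>V. u s = 0}. F u)" by (intro sum_mono low) simp
  also have "\<dots> = (\<Sum>s<n. \<Sum>u\<in>V. if u s = 0 then F u else 0)"
    using fin by (simp add: sum.inter_filter)
  also have "\<dots> = (\<Sum>u\<in>V. \<Sum>s<n. if u s = 0 then F u else 0)" by (rule sum.swap)
  also have "\<dots> = (\<Sum>u\<in>V. real (card {s\<in>{..<n}. u s = 0}) * F u)"
    by (intro sum.cong refl) (simp add: sum.inter_filter[symmetric])
  also have "\<dots> \<le> (\<Sum>u\<in>V. (real n - 1) * (if u \<in> ?C then 0 else F u) + (if u = u0 then F u else 0))"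
  proof (intro sum_mono)
    fix u assume uV: "u \<in> V"
    have cn: "card {s\<in>{..<n}. u s = 0} \<le> n" using card_mono[of "{..<n}" "{s\<in>{..<n}. u s = 0}"] by auto
    show "real (card {s\<in>{..<n}. u s = 0}) * F u \<le> (real n - 1) * (if u \<in> ?C then 0 else F u) + (if u = u0 then F u else 0)"
    proof (cases "u \<in> ?C")
      case True
      then have "{s\<in>{..<n}. u s = 0} = {}" by auto
      then have c0: "card {s\<in>{..<n}. u s = 0} = 0" by (metis card.empty)
      have "u 0 \<noteq> 0" using True n by simp
      moreover have "u0 0 = 0" using u0z n by simp
      ultimately have "u \<noteq> u0" by auto
      then show ?thesis unfolding c0 using True nn[OF uV] by simp
    next
      case False
      note nC = False
      show ?thesis
      proof (cases "u = u0")
        case True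
        have "real (card {s\<in>{..<n}. u s = 0}) * F u \<le> real n * F u"
          using cn nn[OF uV] by (intro mult_right_mono) auto
        moreover have "(real n - 1) * (if u \<in> ?C then 0 else F u) + (if u = u0 then F u else 0) = real n * F u"
          by (simp only: if_not_P[OF nC] if_P[OF True]) (simp add: algebra_simps)
        ultimately show ?thesis by simp
      next
        case False
        then obtain s where s: "s < n" "u s \<noteq> 0" using z[OF uV] by blast
        have sub: "{x\<in>{..<n}. u x = 0} \<subseteq> {..<n}" by blast
        have "s \<in> {..<n}" "s \<notin> {x\<in>{..<n}. u x = 0}" using s by simp_all
        then have "{s\<in>{..<n}. u s = 0} \<subset> {..<n}" using sub by blast
        then have "card {s\<in>{..<n}. u s = 0} < card {..<n::nat}" by (intro psubset_card_mono) auto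
        then have "card {s\<in>{..<n}. u s = 0} < n" by simp
        then have "real (card {s\<in>{..<n}. u s = 0}) \<le> real n - 1" by linarith
        then have "real (card {s\<in>{..<n}. u s = 0}) * F u \<le> (real n - 1) * F u"
          using nn[OF uV] by (intro mult_right_mono) auto
        moreover have "(real n - 1) * (if u \<in> ?C then 0 else F u) + (if u = u0 then F u else 0) = (real n - 1) * F u"
          by (simp only: if_not_P[OF nC] if_not_P[OF False])
        ultimately show ?thesis by simp
      qed
    qed
  qed
  also have "\<dots> = (real n - 1) * (\<Sum>u\<in>V. if u \<in> ?C then 0 else F u) + F u0"
    using fin u0 by (simp add: sum.distrib sum_distrib_left)
  also have "(\<Sum>u\<in>V. if u \<in> ?C then 0 else F u) = D - (\<Sum>u\<in>?C. F u)"
  proof -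
    have "(\<Sum>u\<in>V. F u) = (\<Sum>u\<in>V. if u \<in> ?C then 0 else F u) + (\<Sum>u\<in>V. if u \<in> ?C then F u else 0)"
      unfolding sum.distrib[symmetric] by (intro sum.cong) auto
    moreover have "(\<Sum>u\<in>V. if u \<in> ?C then F u else 0) = (\<Sum>u\<in>?C. F u)"
      using fin by (simp add: sum.inter_filter[symmetric])
    ultimately show ?thesis using tot by simp
  qed
  finally have "(\<Sum>s<n. L s) \<le> (real n - 1) * (D - (\<Sum>u\<in>?C. F u)) + F u0" .
  then have "(real n - 1) * (\<Sum>u\<in>?C. F u) \<le> D * (real n - 1) - (\<Sum>s<n. L s) + 1"
    using F0 by (simp add: algebra_simps)
  moreover have "real n - 1 > 0" using n by simp
  ultimately show ?thesis by (simp add: field_simps)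
qed

lemma GG0:
  assumes u0: "u0 = restrict (\<lambda>_. 0::nat) {..<n}" and K: "k \<in> basis_idx n d" "l \<in> basis_idx n d"
  shows "GG n d w u0 k l = (if k = l then 1 else 0)"
proof -
  have "GG n d w u0 k l = (\<Prod>s<n. if k s = l s then 1 else 0)"
    unfolding GG_def u0 using basis_lt[OF K(1)] by (intro prod.cong refl) (auto simp: gp0)
  also have "\<dots> = (if k = l then 1 else 0)"
  proof (cases "k = l")
    case False
    then obtain r where "r < n" "k r \<noteq> l r" using basis_ext[OF K] by blast
    then show ?thesis using False by (intro trans[OF prod_zero]) auto
  qed simp
  finally show ?thesis .
qed

theorem lemma3:
  fixes n :: nat and d :: "nat \<Rightarrow> nat" and w :: "nat \<Rightarrow> complex"
    and rho :: "(nat \<Rightarrow> nat) \<Rightarrow> (nat \<Rightarrow> nat) \<Rightarrow> complex"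
  assumes "n \<ge> 2"
    and "\<forall>s<n. d s \<ge> 2"
    and "\<forall>s<n. primitive_root (w s) (d s)"
    and "pure_state n d rho"
  shows "(\<Sum>u\<in>corr_idx n d. (cmod (corr_entry n d w rho u))\<^sup>2)
     \<le> ((\<Prod>s<n. real (d s)) * (real n - 1 - (\<Sum>s<n. 1 / (real (d s))\<^sup>2)) + 1) / (real n - 1)"
proof -
  let ?K = "basis_idx n d"
  obtain psi where nrm: "(\<Sum>k\<in>?K. (cmod (psi k))\<^sup>2) = 1"
    and rh: "\<forall>k\<in>?K. \<forall>l\<in>?K. rho k l = psi k * cnj (psi l)"
    using assms(4) unfolding pure_state_def by blast
  let ?V = "PiE {..<n} (\<lambda>r. {..<d r ^ 2})"
  define F where "F u = (cmod (tt n d w psi u))\<^sup>2" for u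
  define D where "D = real (\<Prod>r<n. d r)"
  have dpos: "d r ^ 2 > 0" if "r < n" for r
  proof -
    have "d r \<ge> 2" using assms(2) that by blast
    then show ?thesis by simp
  qed
  have ce: "corr_entry n d w rho u = tt n d w psi u" for u
    unfolding corr_entry_def tt_def GG_def using rh by (intro sum.cong refl) auto
  have cF: "of_real (\<Sum>u\<in>U. F u) = (\<Sum>u\<in>U. tt n d w psi u * cnj (tt n d w psi u))" for U
    unfolding F_def of_real_sum by (intro sum.cong refl) (rule complex_norm_square)
  have tot: "(\<Sum>u\<in>?V. F u) = D"
  proof -
    have "complex_of_real (\<Sum>u\<in>?V. F u) = of_real D"
      using cF[of ?V] total[OF assms(2) assms(3) nrm] unfolding D_def by simp
    then show ?thesis by (simp only: of_real_eq_iff)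
  qed
  have low: "D / (real (d s))\<^sup>2 \<le> (\<Sum>u\<in>{u\<in>?V. u s = 0}. F u)" if s: "s < n" for s
  proof -
    let ?Us = "\<lambda>r. if r = s then {0} else {..<d r ^ 2}"
    let ?Dr = "real (\<Prod>r\<in>{..<n}-{s}. d r)"
    have seteq: "{u\<in>?V. u s = 0} = PiE {..<n} ?Us"
    proof (rule set_eqI, rule iffI)
      fix u assume "u \<in> {u\<in>?V. u s = 0}"
      then have a: "\<forall>i\<in>{..<n}. u i < d i ^ 2" "u \<in> extensional {..<n}" "u s = 0" by (auto simp: PiE_iff)
      have "\<forall>i\<in>{..<n}. u i \<in> ?Us i" using a(1) a(3) by auto
      then show "u \<in> PiE {..<n} ?Us" using a(2) by (simp add: PiE_iff)
    next
      fix u assume "u \<in> PiE {..<n} ?Us"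
      then have a: "\<forall>i\<in>{..<n}. u i \<in> ?Us i" "u \<in> extensional {..<n}" by (auto simp: PiE_iff)
      have "u s \<in> ?Us s" using a(1) s by blast
      then have us: "u s = 0" by simp
      have "\<forall>i\<in>{..<n}. u i \<in> {..<d i ^ 2}"
      proof
        fix i assume i: "i \<in> {..<n}"
        show "u i \<in> {..<d i ^ 2}"
        proof (cases "i = s")
          case True then show ?thesis using us dpos[OF s] by simp
        next
          case False
          have "u i \<in> ?Us i" using a(1) i by blast
          then show ?thesis using False by simp
        qed
      qed
      then show "u \<in> {u\<in>?V. u s = 0}" using a(2) us by (simp add: PiE_iff)
    qed
    have mm: "(\<Sum>a<d s. \<Sum>b<d s. MM n d s psi a b * cnj (MM n d s psi a b)) =
        of_real (\<Sum>a<d s. \<Sum>b<d s. (cmod (MM n d s psi a b))\<^sup>2)"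
      unfolding of_real_sum by (intro sum.cong refl) (rule complex_norm_square[symmetric])
    have "complex_of_real (\<Sum>u\<in>{u\<in>?V. u s = 0}. F u) = of_real (?Dr * (\<Sum>a<d s. \<Sum>b<d s. (cmod (MM n d s psi a b))\<^sup>2))"
      unfolding seteq cF zero_s[OF assms(2) assms(3) s] mm by simp
    then have eq: "(\<Sum>u\<in>{u\<in>?V. u s = 0}. F u) = ?Dr * (\<Sum>a<d s. \<Sum>b<d s. (cmod (MM n d s psi a b))\<^sup>2)"
      by (simp only: of_real_eq_iff)
    have ds: "d s > 0" using dpos[OF s] by simp
    have "?Dr / real (d s) \<le> ?Dr * (\<Sum>a<d s. \<Sum>b<d s. (cmod (MM n d s psi a b))\<^sup>2)"
    proof -
      have "0 \<le> ?Dr" by (simp only: of_nat_0_le_iff)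
      from mult_left_mono[OF lower[OF s ds nrm] this] show ?thesis by simp
    qed
    moreover have "D = real (d s) * ?Dr"
      unfolding D_def using s by (simp add: prod.remove[of "{..<n}" s])
    ultimately show ?thesis using eq ds by (simp add: power2_eq_square)
  qed
  define u0 where "u0 = restrict (\<lambda>_. 0::nat) {..<n}"
  have dgt: "\<forall>i\<in>{..<n}. 0 < d i"
  proof
    fix i assume "i \<in> {..<n}"
    then have "d i \<ge> 2" using assms(2) by blast
    then show "0 < d i" by simp
  qed
  have u0V: "u0 \<in> ?V" unfolding u0_def by (rule restrict_PiE_iff[THEN iffD2]) (use dgt in simp)
  have u0z: "\<forall>s<n. u0 s = 0" unfolding u0_def by simp
  have zz: "u = u0" if "u \<in> ?V" "\<forall>s<n. u s = 0" for u
    by (rule PiE_ext[OF that(1) u0V]) (simp add: that(2) u0z)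
  have t0: "tt n d w psi u0 = 1"
  proof -
    have "tt n d w psi u0 = (\<Sum>k\<in>?K. \<Sum>l\<in>?K. psi k * cnj (psi l) * (if k = l then 1 else 0))"
      unfolding tt_def by (intro sum.cong refl) (simp add: GG0[OF u0_def])
    also have "\<dots> = (\<Sum>k\<in>?K. psi k * cnj (psi k))"
    proof (intro sum.cong refl)
      fix k assume k: "k \<in> ?K"
      have "(\<Sum>l\<in>?K. psi k * cnj (psi l) * (if k = l then 1 else 0)) = (\<Sum>l\<in>?K. if k = l then psi k * cnj (psi l) else 0)"
        by (intro sum.cong refl) simp
      also have "\<dots> = psi k * cnj (psi k)" using k finite_basis by simp
      finally show "(\<Sum>l\<in>?K. psi k * cnj (psi l) * (if k = l then 1 else 0)) = psi k * cnj (psi k)" .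
    qed
    also have "\<dots> = of_real (\<Sum>k\<in>?K. (cmod (psi k))\<^sup>2)"
      unfolding of_real_sum by (intro sum.cong refl) (rule complex_norm_square[symmetric])
    finally show ?thesis using nrm by simp
  qed
  have F0: "F u0 \<le> 1" unfolding F_def t0 by simp
  have ci: "corr_idx n d = {u\<in>?V. \<forall>s<n. u s \<noteq> 0}"
  proof (rule set_eqI)
    fix u
    show "u \<in> corr_idx n d \<longleftrightarrow> u \<in> {u\<in>?V. \<forall>s<n. u s \<noteq> 0}"
    proof -
      have e: "\<And>i. (u i \<in> {1..<d i ^ 2}) = (u i \<in> {..<d i ^ 2} \<and> u i \<noteq> 0)" by auto
      show ?thesis unfolding corr_idx_def PiE_iff mem_Collect_eq e by blast
    qed
  qed
  have main: "(\<Sum>u\<in>{u\<in>?V. \<forall>s<n. u s \<noteq> 0}. F u) \<le> (D * (real n - 1) - (\<Sum>s<n. D / (real (d s))\<^sup>2) + 1) / (real n - 1)"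
  proof -
    have fin: "finite ?V" by (simp add: finite_PiE)
    have nn: "\<And>u. u \<in> ?V \<Longrightarrow> F u \<ge> 0" by (simp add: F_def)
    show ?thesis by (rule comb[OF fin nn u0V zz u0z F0 assms(1) tot low])
  qed
  have lhs: "(\<Sum>u\<in>corr_idx n d. (cmod (corr_entry n d w rho u))\<^sup>2) = (\<Sum>u\<in>{u\<in>?V. \<forall>s<n. u s \<noteq> 0}. F u)"
    unfolding ci F_def ce ..
  have rhs: "D * (real n - 1) - (\<Sum>s<n. D / (real (d s))\<^sup>2) = (\<Prod>s<n. real (d s)) * (real n - 1 - (\<Sum>s<n. 1 / (real (d s))\<^sup>2))"
    unfolding D_def by (simp add: right_diff_distrib sum_distrib_left)
  show ?thesis using main unfolding lhs rhs .
qed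

end
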